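(* Let $P_{\mathrm{T}}>0$, $\sigma^2>0$. For a beamformer $\mathbf{w}:\mathcal{S}_{\mathrm{T}}\to\mathbb{C}^{1\times N}$ define $\mathbf{e}(\mathbf{r})=\int_{\mathcal{S}_{\mathrm{T}}} h(\mathbf{r},\mathbf{s})\mathbf{w}(\mathbf{s})\,d\mathbf{s}$, $\mathbf{Q}=\int_{\mathcal{S}_{\mathrm{R}}}\mathbf{e}^H(\mathbf{r})\mathbf{e}(\mathbf{r})\,d\mathbf{r}$ and $\widetilde{\sigma}^2=\frac{\sigma^2}{P_{\mathrm{T}}}\int_{\mathcal{S}_{\mathrm{T}}}\|\mathbf{w}(\mathbf{s})\|^2d\mathbf{s}$. For a receiver $\mathbf{v}:\mathcal{S}_{\mathrm{R}}\to\mathbb{C}^{1\times N}$ define the MSE matrix $$\mathbf{E}=\left(\mathbf{I}_N-\int_{\mathcal{S}_{\mathrm{R}}}\mathbf{v}^H(\mathbf{r})\mathbf{e}(\mathbf{r})d\mathbf{r}\right)\left(\mathbf{I}_N-\int_{\mathcal{S}_{\mathrm{R}}}\mathbf{v}^H(\mathbf{r})\mathbf{e}(\mathbf{r})d\mathbf{r}\right)^H+\widetilde{\sigma}^2\int_{\mathcal{S}_{\mathrm{R}}}\mathbf{v}^H(\mathbf{r})\mathbf{v}(\mathbf{r})\,d\mathbf{r}.$$ Define a weight matrix $\mathbf{U}\succeq 0$ ($N\times N$ Hermitian). Then the optimal solution $\mathbf{w}$ of the problem $$\max_{\mathbf{w}(\mathbf{s})}\ \log\det\left(\mathbf{I}_N+\frac{1}{\widetilde{\sigma}^2}\mathbf{Q}\right)$$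 is identical to the optimal $\mathbf{w}$ of the problem $$\min_{\mathbf{w}(\mathbf{s}),\,\mathbf{v}(\mathbf{r}),\,\mathbf{U}}\ \mathrm{Tr}(\mathbf{U}\mathbf{E})-\log\det(\mathbf{U}).$$
   Context: $\mathcal{S}_{\mathrm{T}},\mathcal{S}_{\mathrm{R}}\subset\mathbb{R}^3$ are bounded planar rectangular surfaces (transmit and receive continuous aperture arrays) with surface (Lebesgue) integration; $h:\mathcal{S}_{\mathrm{R}}\times\mathcal{S}_{\mathrm{T}}\to\mathbb{C}$ is a bounded channel kernel; beamformers $\mathbf{w}$ (nonzero) and receivers $\mathbf{v}$ are square-integrable row-vector-valued functions; $\|\cdot\|$ is the Euclidean norm and $(\cdot)^H$ is conjugate transpose. *)

theory Defs
  imports "HOL-Analysis.Analysis"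
begin

text \<open>Planar rectangle in R^3 spanned by orthonormal u, v from corner c, sides a, b,
  together with its surface (Lebesgue) measure, obtained by pushing forward the
  2D Lebesgue measure on [0,a] x [0,b] along the isometric parametrisation.\<close>

definition rect_param :: "real^3 \<Rightarrow> real^3 \<Rightarrow> real^3 \<Rightarrow> real \<times> real \<Rightarrow> real^3" where
  "rect_param c u v = (\<lambda>(s, t). c + s *\<^sub>R u + t *\<^sub>R v)"

definition rect_aperture :: "(real^3) set \<Rightarrow> (real^3) measure \<Rightarrow> bool" where
  "rect_aperture S M \<longleftrightarrow> (\<exists>c u v a b. a > 0 \<and> b > 0 \<and> norm u = 1 \<and> norm v = 1 \<and> inner u v = 0
     \<and> S = rect_param c u v ` ({0..a} \<times> {0..b})
     \<and> M = distr (restrict_space lborel ({0..a} \<times> {0..b})) borel (rect_param c u v))"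

definition L2_fun :: "'a measure \<Rightarrow> ('a \<Rightarrow> complex^'n) \<Rightarrow> bool" where
  "L2_fun M f \<longleftrightarrow> f \<in> borel_measurable M \<and> integrable M (\<lambda>x. (norm (f x))\<^sup>2)"

definition cadj :: "complex^'n^'n \<Rightarrow> complex^'n^'n" where
  "cadj A = (\<chi> i j. cnj (A $ j $ i))"

definition hermitian :: "complex^'n^'n \<Rightarrow> bool" where
  "hermitian A \<longleftrightarrow> cadj A = A"

definition pos_def :: "complex^'n^'n \<Rightarrow> bool" where
  "pos_def A \<longleftrightarrow> hermitian A \<and>
     (\<forall>x. x \<noteq> 0 \<longrightarrow> 0 < Re (\<Sum>i\<in>UNIV. cnj (x $ i) * (A *v x) $ i))"

definition eff :: "'a measure \<Rightarrow> ('b \<Rightarrow> 'a \<Rightarrow> complex) \<Rightarrow> ('a \<Rightarrow> complex^'n) \<Rightarrow> 'b \<Rightarrow> complex^'n" where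
  "eff MT h w r = (\<chi> i. LINT s|MT. h r s * (w s $ i))"

definition outer_int :: "'a measure \<Rightarrow> ('a \<Rightarrow> complex^'n) \<Rightarrow> ('a \<Rightarrow> complex^'n) \<Rightarrow> complex^'n^'n" where
  "outer_int M f g = (\<chi> i j. LINT r|M. cnj (f r $ i) * (g r $ j))"

definition Qmat :: "'b measure \<Rightarrow> 'a measure \<Rightarrow> ('b \<Rightarrow> 'a \<Rightarrow> complex) \<Rightarrow> ('a \<Rightarrow> complex^'n) \<Rightarrow> complex^'n^'n" where
  "Qmat MR MT h w = outer_int MR (eff MT h w) (eff MT h w)"

definition sig_tilde :: "real \<Rightarrow> real \<Rightarrow> 'a measure \<Rightarrow> ('a \<Rightarrow> complex^'n) \<Rightarrow> real" where
  "sig_tilde PT sigma2 MT w = sigma2 / PT * (LINT s|MT. (norm (w s))\<^sup>2)"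

definition mse_mat :: "real \<Rightarrow> real \<Rightarrow> 'b measure \<Rightarrow> 'a measure \<Rightarrow> ('b \<Rightarrow> 'a \<Rightarrow> complex)
    \<Rightarrow> ('a \<Rightarrow> complex^'n) \<Rightarrow> ('b \<Rightarrow> complex^'n) \<Rightarrow> complex^'n^'n" where
  "mse_mat PT sigma2 MR MT h w v =
     (let D = mat 1 - outer_int MR v (eff MT h w)
      in D ** cadj D + sig_tilde PT sigma2 MT w *\<^sub>R outer_int MR v v)"

text \<open>Objective of the rate maximisation: log det (I + Q / sigma~^2). The determinant
  is real (positive) here; we take its real part to land in real numbers.\<close>
definition rate_obj :: "real \<Rightarrow> real \<Rightarrow> 'b measure \<Rightarrow> 'a measure \<Rightarrow> ('b \<Rightarrow> 'a \<Rightarrow> complex)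
    \<Rightarrow> ('a \<Rightarrow> complex^'n) \<Rightarrow> real" where
  "rate_obj PT sigma2 MR MT h w =
     ln (Re (det (mat 1 + (1 / sig_tilde PT sigma2 MT w) *\<^sub>R Qmat MR MT h w)))"

text \<open>WMMSE objective Tr(U E) - log det U (both terms are real for Hermitian U, E).\<close>
definition wmmse_obj :: "real \<Rightarrow> real \<Rightarrow> 'b measure \<Rightarrow> 'a measure \<Rightarrow> ('b \<Rightarrow> 'a \<Rightarrow> complex)
    \<Rightarrow> ('a \<Rightarrow> complex^'n) \<Rightarrow> ('b \<Rightarrow> complex^'n) \<Rightarrow> complex^'n^'n \<Rightarrow> real" where
  "wmmse_obj PT sigma2 MR MT h w v U =
     Re (trace (U ** mse_mat PT sigma2 MR MT h w v)) - ln (Re (det U))"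

definition admissible_bf :: "'a measure \<Rightarrow> ('a \<Rightarrow> complex^'n) \<Rightarrow> bool" where
  "admissible_bf MT w \<longleftrightarrow> L2_fun MT w \<and> (LINT s|MT. (norm (w s))\<^sup>2) > 0"

end

theory Submission
  imports Defs
begin

definition cdot :: "complex^'n \<Rightarrow> complex^'n \<Rightarrow> complex" where
  "cdot x y = (\<Sum>i\<in>UNIV. cnj (x$i) * y$i)"

definition spd :: "'n set \<Rightarrow> complex^'n^'n \<Rightarrow> bool" where
  "spd S X \<longleftrightarrow> hermitian X \<and> (\<forall>i j. i \<notin> S \<or> j \<notin> S \<longrightarrow> X$i$j = 0) \<and>
     (\<forall>x. x \<noteq> 0 \<and> (\<forall>i. i \<notin> S \<longrightarrow> x$i = 0) \<longrightarrow> 0 < Re (cdot x (X *v x)))"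

definition PS :: "'n set \<Rightarrow> complex^'n^'n" where
  "PS S = (\<chi> i j. if i = j \<and> i \<notin> S then 1 else 0)"

definition outer :: "complex^'n \<Rightarrow> complex^'n^'n" where
  "outer g = (\<chi> i j. g$i * cnj (g$j))"

lemma herm_entry: "hermitian X \<Longrightarrow> cnj (X$j$i) = X$i$j"
  unfolding hermitian_def cadj_def by (metis vec_lambda_beta)

lemma cadj_entry[simp]: "cadj A $ i $ j = cnj (A $ j $ i)"
  unfolding cadj_def by simp

lemma det_id_row:
  fixes u :: "'a::field^'n"
  shows "det (\<chi> i j. if i = k then (if j = k then 1 else u$j) else (if i = j then 1 else 0)) = (1::'a)"
proof -
  let ?I = "mat 1 :: 'a^'n^'n"
  define u0 where "u0 = (\<chi> j. if j = k then 0 else u$j)"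
  have eq: "(\<chi> i j. if i = k then (if j = k then 1 else u$j) else (if i = j then 1 else 0)) =
     (\<chi> i. if i = k then row k ?I + u0 else row i ?I)"
    by (simp add: vec_eq_iff row_def mat_def u0_def)
  have u0s: "u0 = (\<Sum>j\<in>UNIV - {k}. (u$j) *s row j ?I)"
    by (auto simp: vec_eq_iff u0_def row_def mat_def sum_component if_distrib sum.If_cases)
  have "u0 \<in> vec.span {row j ?I |j. j \<noteq> k}"
    unfolding u0s
  proof (rule vec.span_sum)
    fix j assume "j \<in> UNIV - {k}"
    then show "u$j *s row j ?I \<in> vec.span {row j ?I |j. j \<noteq> k}"
      by (intro vec.span_scale vec.span_base) auto
  qed
  from det_row_span[OF this] show ?thesis unfolding eq by simp
qed

lemma cdot_axis: "cdot (axis k 1) z = z$k"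
proof -
  have "cdot (axis k 1) z = (\<Sum>i\<in>UNIV. if i = k then z$i else 0)"
    unfolding cdot_def axis_def by (rule sum.cong) auto
  then show ?thesis by simp
qed

lemma mv_axis: "(X *v axis k 1) $ i = X$i$k"
  by (simp add: matrix_vector_mult_def axis_def if_distrib cong: if_cong)

lemma mv_diff: "(A::'a::comm_ring_1^'n^'m) *v (x - y) = A *v x - A *v y"
  by (simp add: vec_eq_iff matrix_vector_mult_def algebra_simps sum_subtractf)

lemma mv_smult: "(A::'a::comm_ring_1^'n^'m) *v (c *s x) = c *s (A *v x)"
  by (simp add: vec_eq_iff matrix_vector_mult_def algebra_simps sum_distrib_left)

lemma cdot_diff_left: "cdot (x - y) z = cdot x z - cdot y z"
  by (simp add: cdot_def algebra_simps sum_subtractf)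

lemma cdot_add_left: "cdot (x + y) z = cdot x z + cdot y z"
  by (simp add: cdot_def algebra_simps sum.distrib)

lemma cdot_smult_left: "cdot (c *s x) z = cnj c * cdot x z"
  by (simp add: cdot_def algebra_simps sum_distrib_left)

lemma cdot_diff_right: "cdot z (x - y) = cdot z x - cdot z y"
  by (simp add: cdot_def algebra_simps sum_subtractf)

lemma cdot_add_right: "cdot z (x + y) = cdot z x + cdot z y"
  by (simp add: cdot_def algebra_simps sum.distrib)

lemma cdot_smult_right: "cdot z (c *s x) = c * cdot z x"
  by (simp add: cdot_def algebra_simps sum_distrib_left)

lemma elim_step:
  fixes X :: "complex^'n^'n"
  assumes sp: "spd (insert k S) X" and kS: "k \<notin> S"
  defines "d \<equiv> X$k$k"
  defines "X' \<equiv> (\<chi> i j. X$i$j - X$i$k * X$k$j / d)"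
  shows "Im d = 0" "0 < Re d" "spd S X'"
    "det (X + PS (insert k S)) = d * det (X' + PS S)"
    "X = X' + outer ((1 / complex_of_real (sqrt (Re d))) *s column k X)"
proof -
  have hX[simp]: "\<And>i j. cnj (X$j$i) = X$i$j" using sp herm_entry unfolding spd_def by blast
  have zero: "\<And>i j. i \<notin> insert k S \<or> j \<notin> insert k S \<Longrightarrow> X$i$j = 0"
    using sp unfolding spd_def by blast
  have pd: "\<And>x. x \<noteq> 0 \<Longrightarrow> (\<forall>i. i \<notin> insert k S \<longrightarrow> x$i = 0) \<Longrightarrow> 0 < Re (cdot x (X *v x))"
    using sp unfolding spd_def by blast
  have cd: "cnj d = d" unfolding d_def by simp
  then show imd: "Im d = 0" by (simp add: complex_eq_iff)
  have "0 < Re (cdot (axis k 1) (X *v axis k (1::complex)))"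
    by (rule pd) (auto simp: axis_def vec_eq_iff)
  then show dpos: "0 < Re d" by (simp add: cdot_axis mv_axis d_def)
  then have dnz: "d \<noteq> 0" by auto
  have X'e: "X'$i$j = X$i$j - X$i$k * X$k$j / d" for i j unfolding X'_def by simp
  have X'k1: "X'$k$j = 0" for j using dnz unfolding X'e d_def by simp
  have X'k2: "X'$i$k = 0" for i using dnz unfolding X'e d_def by simp
  show "spd S X'"
    unfolding spd_def
  proof (intro conjI allI impI)
    show "hermitian X'"
      unfolding hermitian_def by (simp add: vec_eq_iff X'e cd mult.commute)
  next
    fix i j assume "i \<notin> S \<or> j \<notin> S"
    then show "X'$i$j = 0"
    proof
      assume i: "i \<notin> S"
      show ?thesis
      proof (cases "i = k")
        case True then show ?thesis using X'k1 by simp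
      next
        case False then show ?thesis using i zero[of i j] zero[of i k] by (simp add: X'e)
      qed
    next
      assume j: "j \<notin> S"
      show ?thesis
      proof (cases "j = k")
        case True then show ?thesis using X'k2 by simp
      next
        case False then show ?thesis using j zero[of i j] zero[of k j] by (simp add: X'e)
      qed
    qed
  next
    fix x :: "complex^'n"
    assume x: "x \<noteq> 0 \<and> (\<forall>i. i \<notin> S \<longrightarrow> x$i = 0)"
    define t where "t = (X *v x)$k / d"
    define y where "y = x - t *s axis k 1"
    have xk: "x$k = 0" using x kS by blast
    have Xyi: "(X *v y)$i = (X *v x)$i - t * X$i$k" for i
      unfolding y_def mv_diff mv_smult by (simp add: mv_axis)
    have X'i: "(X' *v x)$i = (X *v x)$i - X$i$k * ((X *v x)$k / d)" for i
    proof -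
      have "(X' *v x)$i = (\<Sum>j\<in>UNIV. X$i$j * x$j - (X$i$k / d) * (X$k$j * x$j))"
        by (simp add: matrix_vector_mult_def X'e algebra_simps)
      also have "\<dots> = (X *v x)$i - (X$i$k / d) * (X *v x)$k"
        by (simp add: matrix_vector_mult_def sum_subtractf sum_distrib_left)
      finally show ?thesis by simp
    qed
    have Xy: "X' *v x = X *v y"
      by (simp add: vec_eq_iff Xyi X'i t_def mult.commute)
    have Xyk: "(X *v y)$k = 0"
      using dnz by (simp add: Xyi t_def d_def)
    have cy: "cdot y z = cdot x z - cnj t * z$k" for z
      by (simp add: y_def cdot_diff_left cdot_smult_left cdot_axis)
    have eq: "cdot x (X' *v x) = cdot y (X *v y)"
      using Xy Xyk cy by simp
    obtain i where xi: "x$i \<noteq> 0" using x by (metis vec_eq_iff zero_index)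
    then have "i \<in> S" using x by blast
    then have "i \<noteq> k" using kS by blast
    then have "y$i \<noteq> 0" using xi by (simp add: y_def axis_def)
    then have "y \<noteq> 0" by auto
    moreover have "\<forall>i. i \<notin> insert k S \<longrightarrow> y$i = 0"
      using x by (simp add: y_def axis_def)
    ultimately show "0 < Re (cdot x (X' *v x))" using pd eq by simp
  qed
  show "X = X' + outer ((1 / complex_of_real (sqrt (Re d))) *s column k X)"
  proof -
    define c where "c = complex_of_real (sqrt (Re d))"
    have "sqrt (Re d) * sqrt (Re d) = Re d" using dpos by simp
    then have "c * c = complex_of_real (Re d)" unfolding c_def by (metis of_real_mult)
    then have cc: "c * c = d" using imd by (simp add: complex_eq_iff)
    have cnjc: "cnj c = c" unfolding c_def by simp
    have cnz: "c \<noteq> 0" using cc dnz by auto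
    have "(1 / c * X$i$k) * cnj (1 / c * X$j$k) = X$i$k * X$k$j / d" for i j
    proof -
      have "(1 / c * X$i$k) * cnj (1 / c * X$j$k) = (1 / c * X$i$k) * (1 / c * X$k$j)"
        using cnjc by simp
      also have "\<dots> = X$i$k * X$k$j / (c * c)" by simp
      finally show ?thesis using cc by simp
    qed
    then show ?thesis by (simp add: vec_eq_iff outer_def column_def X'e c_def[symmetric])
  qed
  let ?A = "X + PS (insert k S)"
  let ?B = "X' + PS S"
  define E where "E = (\<chi> i j. if j = k then X$i$k / d else (if i = j then 1 else (0::complex)))"
  define F where "F = (\<chi> i j. if i = k then X$k$j / d else (if i = j then 1 else (0::complex)))"
  define Y where "Y = (\<chi> i j. if i = k \<and> j = k then d else ?B$i$j)"
  have Bk1: "?B$k$j = (if j = k then 1 else 0)" for j using kS by (simp add: X'k1 PS_def)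
  have Bk2: "?B$i$k = (if i = k then 1 else 0)" for i using kS by (simp add: X'k2 PS_def)
  have Bk1': "X'$k$j + PS S$k$j = (if j = k then 1 else 0)" for j using Bk1 by simp
  have Bk2': "X'$i$k + PS S$i$k = (if i = k then 1 else 0)" for i using Bk2 by simp
  have dd: "X$k$k / d = 1" using dnz by (simp add: d_def)
  have detF: "det F = 1"
  proof -
    have "F = (\<chi> i j. if i = k then (if j = k then 1 else (\<chi> j. X$k$j / d)$j) else (if i = j then 1 else 0))"
      unfolding F_def using dd by (simp add: vec_eq_iff)
    then show ?thesis using det_id_row by simp
  qed
  have detE: "det E = 1"
  proof -
    have "transpose E = (\<chi> i j. if i = k then (if j = k then 1 else (\<chi> j. X$j$k / d)$j) else (if i = j then 1 else 0))"
      unfolding E_def transpose_def using dd by (auto simp: vec_eq_iff)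
    then have "det (transpose E) = 1" using det_id_row by simp
    then show ?thesis by simp
  qed
  have detY: "det Y = d * det ?B"
  proof -
    have "Y = (\<chi> i. if i = k then d *s row i ?B else row i ?B)"
      unfolding Y_def by (auto simp: vec_eq_iff row_def Bk1')
    moreover have "(\<chi> i. if i = k then row i ?B else row i ?B) = ?B"
      by (simp add: vec_eq_iff row_def)
    ultimately show ?thesis using det_row_mul[of k d "\<lambda>i. row i ?B" "\<lambda>i. row i ?B"] by simp
  qed
  have Z: "Y ** F = (\<chi> p j. if p = k then X$k$j else ?B$p$j)"
  proof -
    have "(Y ** F)$p$j = (if p = k then X$k$j else ?B$p$j)" for p j
    proof -
      have "(Y ** F)$p$j = Y$p$k * F$k$j + (\<Sum>q\<in>UNIV-{k}. Y$p$q * F$q$j)"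
        unfolding matrix_matrix_mult_def by (simp add: sum.remove[of UNIV k])
      also have "(\<Sum>q\<in>UNIV-{k}. Y$p$q * F$q$j) = (\<Sum>q\<in>UNIV-{k}. if q = j then Y$p$q else 0)"
        by (rule sum.cong) (auto simp: F_def)
      also have "\<dots> = (if j = k then 0 else Y$p$j)"
        by (simp add: sum.delta')
      finally have e: "(Y ** F)$p$j = Y$p$k * F$k$j + (if j = k then 0 else Y$p$j)" .
      show ?thesis
      proof (cases "p = k")
        case True
        then show ?thesis using e dnz by (simp add: Y_def F_def Bk1')
      next
        case False
        then show ?thesis using e by (simp add: Y_def F_def Bk2')
      qed
    qed
    then show ?thesis by (simp add: vec_eq_iff)
  qed
  have AEZ: "?A = E ** (Y ** F)"
  proof -
    have "(E ** (Y ** F))$i$j = ?A$i$j" for i j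
    proof -
      have "(E ** (Y ** F))$i$j = E$i$k * (Y ** F)$k$j + (\<Sum>p\<in>UNIV-{k}. E$i$p * (Y ** F)$p$j)"
        unfolding matrix_matrix_mult_def[of E] by (simp add: sum.remove[of UNIV k])
      also have "(\<Sum>p\<in>UNIV-{k}. E$i$p * (Y ** F)$p$j) = (\<Sum>p\<in>UNIV-{k}. if p = i then (Y ** F)$p$j else 0)"
        by (rule sum.cong) (auto simp: E_def)
      also have "\<dots> = (if i = k then 0 else ?B$i$j)"
        by (simp add: sum.delta Z)
      finally have e: "(E ** (Y ** F))$i$j = X$i$k / d * X$k$j + (if i = k then 0 else ?B$i$j)"
        by (simp add: E_def Z)
      show ?thesis
      proof (cases "i = k")
        case True
        then show ?thesis using e dnz by (simp add: PS_def d_def)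
      next
        case False
        then show ?thesis using e by (simp add: PS_def X'e)
      qed
    qed
    then show ?thesis by (simp add: vec_eq_iff)
  qed
  show "det ?A = d * det ?B"
    unfolding AEZ det_mul detE detF detY by simp
qed


lemma spd_empty: "spd {} X \<Longrightarrow> X = 0" by (simp add: spd_def vec_eq_iff)

lemma PS_empty: "PS {} = mat 1" by (simp add: PS_def mat_def vec_eq_iff)

lemma PS_UNIV: "PS UNIV = 0" by (simp add: PS_def vec_eq_iff)

lemma trace_outer: "trace (outer g) = complex_of_real (\<Sum>i\<in>UNIV. (cmod (g$i))\<^sup>2)"
proof -
  have "trace (outer g) = (\<Sum>i\<in>UNIV. complex_of_real ((cmod (g$i))\<^sup>2))"
    unfolding trace_def outer_def by (rule sum.cong) (simp_all only: vec_lambda_beta complex_norm_square)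
  then show ?thesis by (simp add: of_real_sum)
qed

lemma F2: "finite S \<Longrightarrow> spd S X \<Longrightarrow> Im (det (X + PS S)) = 0 \<and> 0 < Re (det (X + PS S)) \<and>
   real (card S) \<le> Re (trace X) - ln (Re (det (X + PS S)))"
proof (induction S arbitrary: X rule: finite_induct)
  case empty
  then have "X = 0" by (rule spd_empty)
  then show ?case by (simp add: PS_empty trace_def)
next
  case (insert k S)
  define d where "d = X$k$k"
  define X' where "X' = (\<chi> i j. X$i$j - X$i$k * X$k$j / d)"
  define g where "g = (1 / complex_of_real (sqrt (Re d))) *s column k X"
  have el: "Im d = 0" "0 < Re d" "spd S X'"
    "det (X + PS (insert k S)) = d * det (X' + PS S)" "X = X' + outer g"
    using elim_step[OF insert.prems insert.hyps(2)] unfolding d_def X'_def g_def by auto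
  have IH: "Im (det (X' + PS S)) = 0" "0 < Re (det (X' + PS S))"
    "real (card S) \<le> Re (trace X') - ln (Re (det (X' + PS S)))"
    using insert.IH[OF el(3)] by auto
  define r where "r = det (X' + PS S)"
  have imd: "Im d = 0" using el(1) .
  have detA: "det (X + PS (insert k S)) = d * r" using el(4) r_def by simp
  have im: "Im (d * r) = 0" using imd IH(1) r_def by simp
  have re: "Re (d * r) = Re d * Re r" using imd IH(1) r_def by simp
  have "0 < Re d * Re r" using el(2) IH(2) r_def by simp
  then have repos: "0 < Re (d * r)" using re by linarith
  have gk: "(cmod (g$k))\<^sup>2 = Re d"
  proof -
    have "g$k = (1 / complex_of_real (sqrt (Re d))) * d"
      unfolding g_def column_def d_def by simp
    moreover have "cmod d = Re d" using imd el(2) by (simp add: cmod_eq_Re)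
    ultimately have "cmod (g$k) = Re d / sqrt (Re d)"
      using el(2) by (simp add: norm_divide norm_mult)
    then show ?thesis using el(2) by (simp add: power_divide power2_eq_square)
  qed
  have trg: "Re d \<le> Re (trace (outer g))"
  proof -
    have "(cmod (g$k))\<^sup>2 \<le> (\<Sum>i\<in>UNIV. (cmod (g$i))\<^sup>2)"
      by (rule member_le_sum) auto
    moreover have "Re (trace (outer g)) = (\<Sum>i\<in>UNIV. (cmod (g$i))\<^sup>2)"
      unfolding trace_outer by (simp only: Re_complex_of_real)
    ultimately show ?thesis using gk by linarith
  qed
  have trX: "Re (trace X) = Re (trace X') + Re (trace (outer g))"
    using el(5) by (metis trace_add plus_complex.simps(1))
  have lnd: "1 \<le> Re d - ln (Re d)" using ln_le_minus_one[OF el(2)] by simp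
  have lnm: "ln (Re (d * r)) = ln (Re d) + ln (Re r)"
    unfolding re using el(2) IH(2) r_def by (simp add: ln_mult)
  have IH3: "real (card S) \<le> Re (trace X') - ln (Re r)" using IH(3) unfolding r_def .
  have cS: "real (card (insert k S)) = real (card S) + 1" using insert.hyps by simp
  have "real (card (insert k S)) \<le> Re (trace X) - ln (Re (d * r))"
    unfolding cS lnm trX using IH3 trg lnd by linarith
  then show ?case unfolding detA using im repos by blast
qed

lemma DEC: "finite S \<Longrightarrow> spd S X \<Longrightarrow> \<exists>c. X = (\<Sum>k\<in>S. outer (c k))"
proof (induction S arbitrary: X rule: finite_induct)
  case empty
  then show ?case using spd_empty by simp
next
  case (insert k S)
  define d where "d = X$k$k"
  define X' where "X' = (\<chi> i j. X$i$j - X$i$k * X$k$j / d)"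
  define g where "g = (1 / complex_of_real (sqrt (Re d))) *s column k X"
  have el: "spd S X'" "X = X' + outer g"
    using elim_step[OF insert.prems insert.hyps(2)] unfolding d_def X'_def g_def by auto
  obtain c where c: "X' = (\<Sum>j\<in>S. outer (c j))" using insert.IH[OF el(1)] by blast
  have "(\<Sum>j\<in>insert k S. outer ((c(k := g)) j)) = outer ((c(k := g)) k) + (\<Sum>j\<in>S. outer ((c(k := g)) j))"
    by (rule sum.insert) (use insert.hyps in auto)
  also have "(\<Sum>j\<in>S. outer ((c(k := g)) j)) = (\<Sum>j\<in>S. outer (c j))"
    by (rule sum.cong) (use insert.hyps in auto)
  finally have "(\<Sum>j\<in>insert k S. outer ((c(k := g)) j)) = outer g + (\<Sum>j\<in>S. outer (c j))"
    by simp
  then have "X = (\<Sum>j\<in>insert k S. outer ((c(k := g)) j))" using el(2) c by (simp add: add.commute)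
  then show ?case by blast
qed

lemma cadj_mult: "cadj (A ** B) = cadj B ** cadj (A :: complex^'n^'n)"
  by (simp add: vec_eq_iff matrix_matrix_mult_def cnj_sum mult.commute)

lemma cadj_cadj[simp]: "cadj (cadj A) = A"
  by (simp add: vec_eq_iff)

lemma cdot_cadj: "cdot x (cadj A *v y) = cdot (A *v x) (y :: complex^'n)"
proof -
  have "cdot x (cadj A *v y) = (\<Sum>i\<in>UNIV. \<Sum>j\<in>UNIV. cnj (x$i) * (cnj (A$j$i) * y$j))"
    unfolding cdot_def matrix_vector_mult_def by (simp add: sum_distrib_left)
  also have "\<dots> = (\<Sum>j\<in>UNIV. \<Sum>i\<in>UNIV. cnj (x$i) * (cnj (A$j$i) * y$j))"
    by (rule sum.swap)
  also have "\<dots> = (\<Sum>j\<in>UNIV. \<Sum>i\<in>UNIV. cnj (A$j$i * x$i) * y$j)"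
    by (intro sum.cong refl) (simp add: mult.assoc mult.left_commute)
  also have "\<dots> = cdot (A *v x) y"
    unfolding cdot_def matrix_vector_mult_def by (simp add: cnj_sum sum_distrib_right)
  finally show ?thesis .
qed

lemma pos_def_spd: "pos_def A \<Longrightarrow> spd UNIV A"
  by (simp add: pos_def_def spd_def cdot_def)

lemma mm_add_r: "((A::'a::comm_ring_1^'n^'m) + B) ** C = A ** C + B ** C"
  by (simp add: vec_eq_iff matrix_matrix_mult_def sum.distrib distrib_right)

lemma mm_diff_r: "((A::'a::comm_ring_1^'n^'m) - B) ** C = A ** C - B ** C"
  by (simp add: vec_eq_iff matrix_matrix_mult_def sum_subtractf left_diff_distrib)

lemma mm_diff_l: "(A::'a::comm_ring_1^'n^'m) ** (B - C) = A ** B - A ** C"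
  by (simp add: vec_eq_iff matrix_matrix_mult_def sum_subtractf right_diff_distrib)

lemma sum_matrix_mult: "finite S \<Longrightarrow> (\<Sum>k\<in>S. A k) ** (M :: complex^'n^'n) = (\<Sum>k\<in>S. A k ** M)"
  by (induction S rule: finite_induct) (simp_all add: mm_add_r)

lemma trace_sum: "finite S \<Longrightarrow> trace (\<Sum>k\<in>S. A k) = (\<Sum>k\<in>S. trace (A k :: complex^'n^'n))"
  by (induction S rule: finite_induct) (simp add: trace_def, simp add: trace_add)

lemma trace_outer_mult: "trace (outer g ** M) = cdot g (M *v g)"
proof -
  have "trace (outer g ** M) = (\<Sum>i\<in>UNIV. \<Sum>p\<in>UNIV. g$i * cnj (g$p) * M$p$i)"
    unfolding trace_def outer_def matrix_matrix_mult_def by (simp only: vec_lambda_beta)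
  also have "\<dots> = (\<Sum>p\<in>UNIV. \<Sum>i\<in>UNIV. g$i * cnj (g$p) * M$p$i)"
    by (rule sum.swap)
  also have "\<dots> = (\<Sum>p\<in>UNIV. \<Sum>i\<in>UNIV. cnj (g$p) * (M$p$i * g$i))"
    by (intro sum.cong refl) (simp only: ac_simps)
  also have "\<dots> = (\<Sum>p\<in>UNIV. cnj (g$p) * (\<Sum>i\<in>UNIV. M$p$i * g$i))"
    by (simp only: sum_distrib_left)
  also have "\<dots> = cdot g (M *v g)"
    unfolding cdot_def matrix_vector_mult_def by (simp only: vec_lambda_beta)
  finally show ?thesis .
qed

lemma det_nz_inj: "det (L :: complex^'n^'n) \<noteq> 0 \<Longrightarrow> L *v x = 0 \<Longrightarrow> x = 0"
proof -
  assume d: "det L \<noteq> 0" and Lx: "L *v x = 0"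
  then have "invertible L" using invertible_det_nz by blast
  then obtain B where B: "B ** L = mat 1" unfolding invertible_def by blast
  have "x = (B ** L) *v x" using B by simp
  also have "\<dots> = B *v (L *v x)" by (simp add: matrix_vector_mul_assoc)
  finally show "x = 0" using Lx by simp
qed

lemma LA_main:
  fixes U Es Us E :: "complex^'n^'n"
  assumes U: "pos_def U" and Es: "pos_def Es" and EsUs: "Es ** Us = mat 1"
    and EE: "\<And>x. Re (cdot x (Es *v x)) \<le> Re (cdot x (E *v x))"
  shows "real CARD('n) - ln (Re (det Us)) \<le> Re (trace (U ** E)) - ln (Re (det U))"
proof -
  have sU: "spd UNIV U" and sEs: "spd UNIV Es" using U Es pos_def_spd by auto
  have "\<exists>c. U = (\<Sum>k\<in>(UNIV::'n set). outer (c k))" using DEC[of UNIV U] sU by simp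
  then obtain c :: "'n \<Rightarrow> complex^'n" where Uc: "U = (\<Sum>k\<in>UNIV. outer (c k))" by blast
  have trU: "trace (U ** M) = (\<Sum>k\<in>UNIV. cdot (c k) (M *v c k))" for M
    unfolding Uc by (simp add: sum_matrix_mult trace_sum trace_outer_mult)
  have tr1: "Re (trace (U ** Es)) \<le> Re (trace (U ** E))"
    unfolding trU Re_sum by (rule sum_mono) (rule EE)
  define L where "L = (\<chi> i j. c j $ i)"
  have UL: "U = L ** cadj L"
    unfolding Uc L_def by (simp add: vec_eq_iff matrix_matrix_mult_def outer_def sum_component)
  define X where "X = cadj L ** (Es ** L)"
  have trX: "trace X = trace (U ** Es)"
    unfolding X_def UL by (metis matrix_mul_assoc trace_mul_sym)
  have detX: "det X = det Es * det U"
    unfolding X_def UL det_mul by simp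
  have FU: "Im (det U) = 0" "0 < Re (det U)" using F2[of UNIV U] sU by (auto simp: PS_UNIV)
  have FEs: "Im (det Es) = 0" "0 < Re (det Es)" using F2[of UNIV Es] sEs by (auto simp: PS_UNIV)
  have "det U = det L * det (cadj L)" unfolding UL by (rule det_mul)
  then have dL: "det L \<noteq> 0" using FU by auto
  have hEs: "cadj Es = Es" using Es by (simp add: pos_def_def hermitian_def)
  have sX: "spd UNIV X"
    unfolding spd_def
  proof (intro conjI allI impI)
    show "hermitian X" unfolding hermitian_def X_def
      by (simp add: cadj_mult hEs matrix_mul_assoc)
  next
    fix x :: "complex^'n" assume x: "x \<noteq> 0 \<and> (\<forall>i. i \<notin> UNIV \<longrightarrow> x$i = 0)"
    have "L *v x \<noteq> 0" using x det_nz_inj[OF dL] by blast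
    then have "0 < Re (cdot (L *v x) (Es *v (L *v x)))"
      using sEs unfolding spd_def by blast
    moreover have "cdot x (X *v x) = cdot (L *v x) (Es *v (L *v x))"
      unfolding X_def by (simp add: matrix_vector_mul_assoc[symmetric] cdot_cadj)
    ultimately show "0 < Re (cdot x (X *v x))" by simp
  qed simp
  have FX: "real (card (UNIV::'n set)) \<le> Re (trace X) - ln (Re (det X))"
    using F2[of UNIV X] sX by (auto simp: PS_UNIV)
  have reX: "Re (det X) = Re (det Es) * Re (det U)" unfolding detX using FU FEs by simp
  have lnX: "ln (Re (det X)) = ln (Re (det Es)) + ln (Re (det U))"
    unfolding reX using FU FEs by (simp add: ln_mult)
  have prod1: "det Es * det Us = 1" using EsUs det_mul det_I by metis
  have nz: "det Es \<noteq> 0" using FEs by auto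
  define r where "r = Re (det Es)"
  have dEs: "det Es = complex_of_real r" using FEs unfolding r_def by (simp add: complex_eq_iff)
  have "det Us = 1 / det Es" using prod1 nz by (simp add: field_simps)
  also have "\<dots> = complex_of_real (1 / r)" unfolding dEs by simp
  finally have "Re (det Us) = 1 / r" by simp
  then have lnUs: "ln (Re (det Us)) = - ln (Re (det Es))" using FEs unfolding r_def by (simp add: ln_div)
  have trX': "Re (trace X) = Re (trace (U ** Es))" using trX by simp
  have cU: "real (card (UNIV::'n set)) = real CARD('n)" by simp
  show ?thesis using FX trX' tr1 lnX lnUs cU by linarith
qed

lemma L2_meas: "L2_fun M f \<Longrightarrow> f \<in> borel_measurable M"
  by (simp add: L2_fun_def)

lemma L2_int: "L2_fun M f \<Longrightarrow> integrable M (\<lambda>x. (norm (f x))\<^sup>2)"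
  by (simp add: L2_fun_def)

lemma L2_comp:
  fixes f :: "'a \<Rightarrow> complex^'n"
  assumes "L2_fun M f" shows "(\<lambda>x. f x $ i) \<in> borel_measurable M"
proof -
  have "f \<in> borel_measurable M" using assms by (rule L2_meas)
  moreover have "(\<lambda>x::complex^'n. x $ i) \<in> borel_measurable borel"
    by (rule borel_measurable_continuous_onI)
      (rule bounded_linear.continuous_on[OF bounded_linear_vec_nth continuous_on_id])
  ultimately show ?thesis by (rule measurable_compose)
qed

lemma meas_cnj:
  assumes "F \<in> borel_measurable M" shows "(\<lambda>x. cnj (F x)) \<in> borel_measurable M"
proof -
  have "cnj \<in> borel_measurable borel"
    by (rule borel_measurable_continuous_onI) (intro continuous_intros)
  with assms show ?thesis by (rule measurable_compose)
qed

lemma ab_le_sq: "0 \<le> (a::real) \<Longrightarrow> 0 \<le> b \<Longrightarrow> a * b \<le> a\<^sup>2 + b\<^sup>2"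
proof -
  assume "0 \<le> a" "0 \<le> b"
  then have "0 \<le> a * b" by simp
  moreover have "0 \<le> (a - b)\<^sup>2" by simp
  then have "2 * (a * b) \<le> a\<^sup>2 + b\<^sup>2" by (simp add: power2_eq_square algebra_simps)
  ultimately show ?thesis by linarith
qed

lemma two_ab: "2 * ((a::real) * b) \<le> a\<^sup>2 + b\<^sup>2"
proof -
  have "0 \<le> (a - b)\<^sup>2" by simp
  then show ?thesis by (simp add: power2_eq_square algebra_simps)
qed

lemma I1:
  assumes f: "L2_fun M f" and g: "L2_fun M g"
  shows "integrable M (\<lambda>x. cnj (f x $ i) * g x $ j)"
proof (rule Bochner_Integration.integrable_bound)
  show "integrable M (\<lambda>x. (norm (f x))\<^sup>2 + (norm (g x))\<^sup>2)"
    using L2_int[OF f] L2_int[OF g] by (rule Bochner_Integration.integrable_add)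
  show "(\<lambda>x. cnj (f x $ i) * g x $ j) \<in> borel_measurable M"
    by (rule borel_measurable_times[OF meas_cnj[OF L2_comp[OF f]] L2_comp[OF g]])
  show "AE x in M. norm (cnj (f x $ i) * g x $ j) \<le> norm ((norm (f x))\<^sup>2 + (norm (g x))\<^sup>2)"
  proof (rule AE_I2)
    fix x
    have "norm (cnj (f x $ i) * g x $ j) = norm (f x $ i) * norm (g x $ j)"
      by (simp add: norm_mult)
    also have "\<dots> \<le> norm (f x) * norm (g x)"
      by (intro mult_mono Finite_Cartesian_Product.norm_nth_le) auto
    also have "\<dots> \<le> (norm (f x))\<^sup>2 + (norm (g x))\<^sup>2"
      by (rule ab_le_sq) auto
    finally show "norm (cnj (f x $ i) * g x $ j) \<le> norm ((norm (f x))\<^sup>2 + (norm (g x))\<^sup>2)"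
      by simp
  qed
qed

lemma L2_diff:
  assumes f: "L2_fun M f" and g: "L2_fun M g"
  shows "L2_fun M (\<lambda>x. f x - g x)"
  unfolding L2_fun_def
proof
  show "(\<lambda>x. f x - g x) \<in> borel_measurable M"
    using L2_meas[OF f] L2_meas[OF g] by (rule borel_measurable_diff)
  show "integrable M (\<lambda>x. (norm (f x - g x))\<^sup>2)"
  proof (rule Bochner_Integration.integrable_bound)
    show "integrable M (\<lambda>x. 2 * (norm (f x))\<^sup>2 + 2 * (norm (g x))\<^sup>2)"
      using L2_int[OF f] L2_int[OF g] by (intro Bochner_Integration.integrable_add Bochner_Integration.integrable_mult_right)
    show "(\<lambda>x. (norm (f x - g x))\<^sup>2) \<in> borel_measurable M"
      using L2_meas[OF f] L2_meas[OF g] by measurable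
    show "AE x in M. norm ((norm (f x - g x))\<^sup>2) \<le> norm (2 * (norm (f x))\<^sup>2 + 2 * (norm (g x))\<^sup>2)"
    proof (rule AE_I2)
      fix x
      have n: "norm (f x - g x) \<le> norm (f x) + norm (g x)" by (rule norm_triangle_ineq4)
      have "(norm (f x - g x))\<^sup>2 \<le> (norm (f x) + norm (g x))\<^sup>2"
        using n by (intro power_mono) auto
      also have "\<dots> \<le> 2 * (norm (f x))\<^sup>2 + 2 * (norm (g x))\<^sup>2"
        using two_ab[of "norm (f x)" "norm (g x)"] by (simp add: power2_eq_square algebra_simps)
      finally show "norm ((norm (f x - g x))\<^sup>2) \<le> norm (2 * (norm (f x))\<^sup>2 + 2 * (norm (g x))\<^sup>2)"
        by simp
    qed
  qed
qed

lemma bl_vm: "bounded_linear (\<lambda>y::complex^'n. y v* (A::complex^'m^'n))"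
proof -
  have "linear (\<lambda>y::complex^'n. y v* A)"
    by (rule linearI) (simp_all add: vector_matrix_left_distrib vec_eq_iff vector_matrix_mult_def scaleR_sum_right sum.distrib distrib_right)
  then show ?thesis using linear_conv_bounded_linear by blast
qed

lemma L2_vm:
  assumes f: "L2_fun M f"
  shows "L2_fun M (\<lambda>x. f x v* A)"
  unfolding L2_fun_def
proof
  obtain K where K: "K > 0" "\<And>y. norm (y v* A) \<le> norm y * K"
    using bounded_linear.pos_bounded[OF bl_vm[of A]] by blast
  have cm: "(\<lambda>y. y v* A) \<in> borel_measurable borel"
    by (rule borel_measurable_continuous_onI) (rule bounded_linear.continuous_on[OF bl_vm continuous_on_id])
  show "(\<lambda>x. f x v* A) \<in> borel_measurable M"
    using measurable_compose[OF L2_meas[OF f] cm] .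
  show "integrable M (\<lambda>x. (norm (f x v* A))\<^sup>2)"
  proof (rule Bochner_Integration.integrable_bound)
    show "integrable M (\<lambda>x. K\<^sup>2 * (norm (f x))\<^sup>2)"
      using L2_int[OF f] by (rule Bochner_Integration.integrable_mult_right)
    show "(\<lambda>x. (norm (f x v* A))\<^sup>2) \<in> borel_measurable M"
      using measurable_compose[OF L2_meas[OF f] cm] by measurable
    show "AE x in M. norm ((norm (f x v* A))\<^sup>2) \<le> norm (K\<^sup>2 * (norm (f x))\<^sup>2)"
    proof (rule AE_I2)
      fix x
      have "(norm (f x v* A))\<^sup>2 \<le> (norm (f x) * K)\<^sup>2"
        using K(2)[of "f x"] by (intro power_mono) auto
      then show "norm ((norm (f x v* A))\<^sup>2) \<le> norm (K\<^sup>2 * (norm (f x))\<^sup>2)"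
        by (simp add: power_mult_distrib mult.commute)
    qed
  qed
qed


lemma O4: "cadj (outer_int M f g) = outer_int M g f"
proof -
  have "cnj (LINT r|M. cnj (f r $ j) * g r $ i) = (LINT r|M. cnj (g r $ i) * f r $ j)" for i j
  proof -
    have "cnj (LINT r|M. cnj (f r $ j) * g r $ i) = (LINT r|M. cnj (cnj (f r $ j) * g r $ i))"
      by (rule Bochner_Integration.integral_cnj[symmetric])
    also have "\<dots> = (LINT r|M. cnj (g r $ i) * f r $ j)"
      by (rule Bochner_Integration.integral_cong) (simp_all add: mult.commute)
    finally show ?thesis .
  qed
  then show ?thesis by (simp add: vec_eq_iff outer_int_def)
qed

lemma O3l:
  assumes f: "L2_fun M f" and f': "L2_fun M f'" and g: "L2_fun M g"
  shows "outer_int M (\<lambda>r. f r - f' r) g = outer_int M f g - outer_int M f' g"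
proof -
  have "(LINT r|M. cnj ((f r - f' r) $ i) * g r $ j) =
        (LINT r|M. cnj (f r $ i) * g r $ j) - (LINT r|M. cnj (f' r $ i) * g r $ j)" for i j
  proof -
    have "(LINT r|M. cnj ((f r - f' r) $ i) * g r $ j) =
          (LINT r|M. cnj (f r $ i) * g r $ j - cnj (f' r $ i) * g r $ j)"
      by (rule Bochner_Integration.integral_cong) (simp_all add: left_diff_distrib)
    also have "\<dots> = (LINT r|M. cnj (f r $ i) * g r $ j) - (LINT r|M. cnj (f' r $ i) * g r $ j)"
      by (rule Bochner_Integration.integral_diff) (rule I1[OF f g], rule I1[OF f' g])
    finally show ?thesis .
  qed
  then show ?thesis by (simp add: vec_eq_iff outer_int_def)
qed

lemma O3r:
  assumes f: "L2_fun M f" and g: "L2_fun M g" and g': "L2_fun M g'"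
  shows "outer_int M f (\<lambda>r. g r - g' r) = outer_int M f g - outer_int M f g'"
proof -
  have "outer_int M f (\<lambda>r. g r - g' r) = cadj (outer_int M (\<lambda>r. g r - g' r) f)" by (simp add: O4)
  also have "\<dots> = cadj (outer_int M g f - outer_int M g' f)" by (simp add: O3l[OF g g' f])
  also have "\<dots> = cadj (outer_int M g f) - cadj (outer_int M g' f)"
    by (simp add: vec_eq_iff)
  also have "\<dots> = outer_int M f g - outer_int M f g'"
    by (simp only: O4)
  finally show ?thesis .
qed

lemma O1:
  assumes f: "L2_fun M f" and g: "L2_fun M g"
  shows "outer_int M f (\<lambda>r. g r v* A) = outer_int M f g ** A"
proof -
  have "(LINT r|M. cnj (f r $ i) * (g r v* A) $ j) = (\<Sum>p\<in>UNIV. (LINT r|M. cnj (f r $ i) * g r $ p) * A$p$j)"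
    for i j
  proof -
    have "(LINT r|M. cnj (f r $ i) * (g r v* A) $ j) = (LINT r|M. (\<Sum>p\<in>UNIV. cnj (f r $ i) * g r $ p * A$p$j))"
      by (rule Bochner_Integration.integral_cong)
        (simp_all add: vector_matrix_mult_def sum_distrib_left mult.assoc)
    also have "\<dots> = (\<Sum>p\<in>UNIV. (LINT r|M. cnj (f r $ i) * g r $ p * A$p$j))"
      by (rule Bochner_Integration.integral_sum) (rule Bochner_Integration.integrable_mult_left, rule I1[OF f g])
    also have "\<dots> = (\<Sum>p\<in>UNIV. (LINT r|M. cnj (f r $ i) * g r $ p) * A$p$j)"
      by (simp only: integral_mult_left_zero)
    finally show ?thesis .
  qed
  then show ?thesis by (simp add: vec_eq_iff outer_int_def matrix_matrix_mult_def)
qed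

lemma O2:
  assumes f: "L2_fun M f" and g: "L2_fun M g"
  shows "outer_int M (\<lambda>r. f r v* A) g = cadj A ** outer_int M f g"
proof -
  have "outer_int M (\<lambda>r. f r v* A) g = cadj (outer_int M g (\<lambda>r. f r v* A))" by (simp add: O4)
  also have "\<dots> = cadj (outer_int M g f ** A)" by (simp add: O1[OF g f])
  also have "\<dots> = cadj A ** outer_int M f g" by (simp add: cadj_mult O4)
  finally show ?thesis .
qed

lemma O5:
  fixes f :: "'a \<Rightarrow> complex^'n"
  assumes f: "L2_fun M f"
  shows "0 \<le> Re (cdot x (outer_int M f f *v x))"
proof -
  define phi where "phi r = (\<Sum>j\<in>UNIV. f r $ j * x $ j)" for r
  have "cdot x (outer_int M f f *v x) =
     (\<Sum>i\<in>UNIV. \<Sum>j\<in>UNIV. cnj (x$i) * x$j * (LINT r|M. cnj (f r $ i) * f r $ j))"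
  proof -
    have "cdot x (outer_int M f f *v x) =
      (\<Sum>i\<in>UNIV. cnj (x$i) * (\<Sum>j\<in>UNIV. (LINT r|M. cnj (f r $ i) * f r $ j) * x$j))"
      unfolding cdot_def matrix_vector_mult_def outer_int_def by (simp only: vec_lambda_beta)
    also have "\<dots> = (\<Sum>i\<in>UNIV. \<Sum>j\<in>UNIV. cnj (x$i) * ((LINT r|M. cnj (f r $ i) * f r $ j) * x$j))"
      by (simp only: sum_distrib_left)
    also have "\<dots> = (\<Sum>i\<in>UNIV. \<Sum>j\<in>UNIV. cnj (x$i) * x$j * (LINT r|M. cnj (f r $ i) * f r $ j))"
      by (intro sum.cong refl) (simp only: ac_simps)
    finally show ?thesis .
  qed
  also have "\<dots> = (\<Sum>i\<in>UNIV. \<Sum>j\<in>UNIV. (LINT r|M. cnj (x$i) * x$j * (cnj (f r $ i) * f r $ j)))"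
    by (simp only: integral_mult_right_zero)
  also have "\<dots> = (\<Sum>i\<in>UNIV. (LINT r|M. (\<Sum>j\<in>UNIV. cnj (x$i) * x$j * (cnj (f r $ i) * f r $ j))))"
    by (intro sum.cong refl Bochner_Integration.integral_sum[symmetric]
        Bochner_Integration.integrable_mult_right I1[OF f f])
  also have "\<dots> = (LINT r|M. (\<Sum>i\<in>UNIV. \<Sum>j\<in>UNIV. cnj (x$i) * x$j * (cnj (f r $ i) * f r $ j)))"
    by (intro Bochner_Integration.integral_sum[symmetric] Bochner_Integration.integrable_sum
        Bochner_Integration.integrable_mult_right I1[OF f f])
  also have "\<dots> = (LINT r|M. complex_of_real ((cmod (phi r))\<^sup>2))"
  proof (rule Bochner_Integration.integral_cong)
    fix r
    have "complex_of_real ((cmod (phi r))\<^sup>2) = phi r * cnj (phi r)" by (rule complex_norm_square)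
    also have "\<dots> = (\<Sum>j\<in>UNIV. f r $ j * x $ j) * (\<Sum>i\<in>UNIV. cnj (f r $ i * x $ i))"
      unfolding phi_def by (simp add: cnj_sum)
    also have "\<dots> = (\<Sum>j\<in>UNIV. \<Sum>i\<in>UNIV. f r $ j * x $ j * cnj (f r $ i * x $ i))"
      by (rule sum_product)
    also have "\<dots> = (\<Sum>i\<in>UNIV. \<Sum>j\<in>UNIV. f r $ j * x $ j * cnj (f r $ i * x $ i))"
      by (rule sum.swap)
    also have "\<dots> = (\<Sum>i\<in>UNIV. \<Sum>j\<in>UNIV. cnj (x$i) * x$j * (cnj (f r $ i) * f r $ j))"
      by (intro sum.cong refl) (simp only: complex_cnj_mult ac_simps)
    finally show "(\<Sum>i\<in>UNIV. \<Sum>j\<in>UNIV. cnj (x$i) * x$j * (cnj (f r $ i) * f r $ j)) =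
      complex_of_real ((cmod (phi r))\<^sup>2)" by simp
  qed simp
  also have "\<dots> = complex_of_real (LINT r|M. (cmod (phi r))\<^sup>2)"
    by (rule integral_complex_of_real)
  finally have "Re (cdot x (outer_int M f f *v x)) = (LINT r|M. (cmod (phi r))\<^sup>2)" by simp
  also have "0 \<le> \<dots>" by (rule Bochner_Integration.integral_nonneg) simp
  finally show ?thesis by simp
qed

lemma cadj_diff: "cadj (A - B) = cadj A - cadj (B :: complex^'n^'n)"
  by (simp add: vec_eq_iff)

lemma cadj_add: "cadj (A + B) = cadj A + cadj (B :: complex^'n^'n)"
  by (simp add: vec_eq_iff)

lemma scaleR_entry: "(a *\<^sub>R A) $ i $ j = complex_of_real a * (A :: complex^'n^'m) $ i $ j"
  by (simp only: vector_scaleR_component) (simp add: scaleR_conv_of_real)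

lemma cadj_scaleR: "cadj (a *\<^sub>R A) = a *\<^sub>R cadj (A :: complex^'n^'n)"
  by (simp only: vec_eq_iff scaleR_entry cadj_entry) simp

lemma cadj_mat1: "cadj (mat 1 :: complex^'n^'n) = mat 1"
  by (simp add: vec_eq_iff mat_def)

lemma E_identity:
  fixes P Q K W :: "complex^'n^'n" and a :: real
  assumes PQ: "P ** (Q + a *\<^sub>R mat 1) = mat 1" and hP: "cadj P = P"
  shows "(mat 1 - (P ** Q + K)) ** cadj (mat 1 - (P ** Q + K))
           + a *\<^sub>R (P ** Q ** P + K ** P + P ** cadj K + W)
         = a *\<^sub>R P + K ** cadj K + a *\<^sub>R W"
proof -
  have "P ** Q + a *\<^sub>R P = mat 1"
    using PQ by (simp add: matrix_add_ldistrib matrix_scalar_ac)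
  then have PQ': "P ** Q = mat 1 - a *\<^sub>R P" by (simp add: algebra_simps)
  have D: "mat 1 - (P ** Q + K) = a *\<^sub>R P - K" by (simp add: PQ')
  have Dh: "cadj (a *\<^sub>R P - K) = a *\<^sub>R P - cadj K" by (simp add: cadj_diff cadj_scaleR hP)
  have PQP: "P ** Q ** P = P - a *\<^sub>R (P ** P)"
    by (simp add: PQ' mm_diff_r scalar_matrix_assoc[symmetric])
  have prod: "(a *\<^sub>R P - K) ** (a *\<^sub>R P - cadj K) =
      (a * a) *\<^sub>R (P ** P) - a *\<^sub>R (P ** cadj K) - a *\<^sub>R (K ** P) + K ** cadj K"
    by (simp add: mm_diff_l mm_diff_r matrix_scalar_ac scalar_matrix_assoc[symmetric] algebra_simps)
  show ?thesis
    unfolding D Dh prod PQP by (simp add: algebra_simps)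
qed

lemma cdot_self: "0 \<le> Re (cdot y (y :: complex^'n))"
  unfolding cdot_def Re_sum by (rule sum_nonneg) (simp add: power2_eq_square[symmetric])

lemma qf_KK: "0 \<le> Re (cdot x ((K ** cadj K) *v x))"
proof -
  have "cdot x ((K ** cadj K) *v x) = cdot x (cadj (cadj K) *v (cadj K *v x))"
    by (simp add: matrix_vector_mul_assoc)
  also have "\<dots> = cdot (cadj K *v x) (cadj K *v x)" by (rule cdot_cadj)
  finally show ?thesis using cdot_self by simp
qed

lemma qf_add: "cdot x ((A + B) *v x) = cdot x (A *v x) + cdot x (B *v (x :: complex^'n))"
  by (simp add: matrix_vector_mult_add_rdistrib cdot_add_right)

lemma qf_scaleR: "cdot x ((a *\<^sub>R A) *v x) = complex_of_real a * cdot x (A *v (x :: complex^'n))"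
proof -
  have "(a *\<^sub>R A) *v x = complex_of_real a *s (A *v x)"
    by (simp only: vec_eq_iff matrix_vector_mult_def scaleR_entry vec_lambda_beta vector_smult_component
        sum_distrib_left mult.assoc) simp
  then show ?thesis by (simp add: cdot_smult_right)
qed

lemma E_ge:
  fixes E Es K W :: "complex^'n^'n"
  assumes E: "E = Es + K ** cadj K + a *\<^sub>R W" and a: "0 \<le> a"
    and W: "\<And>x. 0 \<le> Re (cdot x (W *v x))"
  shows "Re (cdot x (Es *v x)) \<le> Re (cdot x (E *v x))"
proof -
  have "Re (cdot x (E *v x)) = Re (cdot x (Es *v x)) + Re (cdot x ((K ** cadj K) *v x))
      + a * Re (cdot x (W *v x))"
    unfolding E qf_add qf_scaleR by simp
  moreover have "0 \<le> a * Re (cdot x (W *v x))" using a W by simp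
  ultimately show ?thesis using qf_KK[of x K] by linarith
qed

lemma vec_meas:
  fixes f :: "'a \<Rightarrow> complex^'n"
  assumes m: "\<And>i. (\<lambda>x. f x $ i) \<in> borel_measurable M"
  shows "f \<in> borel_measurable M"
proof (rule borel_measurable_euclidean_space[THEN iffD2], intro ballI)
  fix b :: "complex^'n" assume "b \<in> Basis"
  then obtain i u where u: "u \<in> Basis" "b = axis i u" unfolding Basis_vec_def by auto
  have "(\<lambda>x. f x $ i \<bullet> u) \<in> borel_measurable M"
    by (rule borel_measurable_inner[OF m measurable_const]) simp
  then show "(\<lambda>x. f x \<bullet> b) \<in> borel_measurable M" using u by (simp add: inner_axis)
qed

lemma rect_props:
  assumes "rect_aperture S M"
  shows "finite_measure M" "sets M = sets borel" "AE x in M. x \<in> S"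
proof -
  obtain c u v a b where ab: "a > 0" "b > 0"
    and S: "S = rect_param c u v ` ({0..a} \<times> {0..b})"
    and M: "M = distr (restrict_space lborel ({0..a} \<times> {0..b})) borel (rect_param c u v)"
    using assms unfolding rect_aperture_def by blast
  define R :: "(real \<times> real) set" where "R = {0..a} \<times> {0..b}"
  have rp: "rect_param c u v = (\<lambda>p. c + fst p *\<^sub>R u + snd p *\<^sub>R v)"
    unfolding rect_param_def by (rule ext) (simp add: split_beta)
  have cont: "continuous_on UNIV (rect_param c u v)"
    unfolding rp by (intro continuous_intros)
  have mb: "rect_param c u v \<in> borel_measurable borel"
    by (rule borel_measurable_continuous_onI[OF cont])
  have mR: "rect_param c u v \<in> restrict_space lborel R \<rightarrow>\<^sub>M borel"
    by (rule measurable_restrict_space1) (simp add: mb)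
  have cR: "compact R" unfolding R_def by (intro compact_Times compact_Icc)
  have Rs: "R \<in> sets lborel" using cR by (simp add: compact_imp_closed)
  have "emeasure (restrict_space lborel R) (space (restrict_space lborel R)) = emeasure lborel R"
    using Rs by (simp add: emeasure_restrict_space space_restrict_space)
  also have "\<dots> < \<infinity>" using cR by (intro emeasure_bounded_finite compact_imp_bounded)
  finally have "finite_measure (restrict_space lborel R)" by (intro finite_measureI) simp
  then show "finite_measure M" unfolding M R_def[symmetric] using mR
    by (rule finite_measure.finite_measure_distr)
  show "sets M = sets borel" unfolding M by simp
  have cS: "compact S" unfolding S R_def[symmetric]
    by (rule compact_continuous_image[OF continuous_on_subset[OF cont] cR]) simp
  have Sb: "{x \<in> space borel. x \<in> S} \<in> sets borel" using cS by (simp add: compact_imp_closed)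
  have "AE x in restrict_space lborel R. rect_param c u v x \<in> S"
    by (rule AE_I2) (simp add: S R_def space_restrict_space)
  then show "AE x in M. x \<in> S"
    unfolding M R_def[symmetric] using AE_distr_iff[OF mR Sb] by simp
qed

lemma L2_norm_int:
  assumes fM: "finite_measure M" and w: "L2_fun M w"
  shows "integrable M (\<lambda>x. norm (w x))"
proof (rule Bochner_Integration.integrable_bound)
  show "integrable M (\<lambda>x. 1 + (norm (w x))\<^sup>2)"
    by (intro Bochner_Integration.integrable_add finite_measure.integrable_const[OF fM] L2_int[OF w])
  show "(\<lambda>x. norm (w x)) \<in> borel_measurable M" using L2_meas[OF w] by measurable
  show "AE x in M. norm (norm (w x)) \<le> norm (1 + (norm (w x))\<^sup>2)"
  proof (rule AE_I2)
    fix x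
    have "norm (w x) \<le> 1 + (norm (w x))\<^sup>2"
    proof (cases "norm (w x) \<le> 1")
      case True then show ?thesis by (simp add: add_increasing2)
    next
      case False
      then have "norm (w x) * 1 \<le> norm (w x) * norm (w x)" by (intro mult_left_mono) auto
      then show ?thesis by (simp add: power2_eq_square)
    qed
    then show "norm (norm (w x)) \<le> norm (1 + (norm (w x))\<^sup>2)" by simp
  qed
qed

lemma eff_L2:
  fixes h :: "'b \<Rightarrow> 'a \<Rightarrow> complex" and w :: "'a \<Rightarrow> complex^'n"
  assumes fMT: "finite_measure MT" and fMR: "finite_measure MR"
    and hm: "(\<lambda>(r, s). h r s) \<in> borel_measurable (MR \<Otimes>\<^sub>M MT)"
    and B: "\<And>r s. r \<in> SR \<Longrightarrow> s \<in> ST \<Longrightarrow> norm (h r s) \<le> B"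
    and AR: "AE r in MR. r \<in> SR" and AT: "AE s in MT. s \<in> ST"
    and w: "L2_fun MT w"
  shows "L2_fun MR (eff MT h w)"
proof -
  have sMT: "sigma_finite_measure MT" using fMT by (simp add: finite_measure_def)
  have mi: "(\<lambda>r. eff MT h w r $ i) \<in> borel_measurable MR" for i
  proof -
    have "(\<lambda>p. (\<lambda>(r, s). h r s) p * w (snd p) $ i) \<in> borel_measurable (MR \<Otimes>\<^sub>M MT)"
      by (rule borel_measurable_times[OF hm measurable_compose[OF measurable_snd L2_comp[OF w]]])
    moreover have "(\<lambda>p. (\<lambda>(r, s). h r s) p * w (snd p) $ i) = (\<lambda>(r, s). h r s * w s $ i)"
      by (auto simp: fun_eq_iff)
    ultimately have "(\<lambda>(r, s). h r s * w s $ i) \<in> borel_measurable (MR \<Otimes>\<^sub>M MT)" by simp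
    from sigma_finite_measure.borel_measurable_lebesgue_integral[OF sMT this]
    show ?thesis by (simp add: eff_def)
  qed
  have me: "eff MT h w \<in> borel_measurable MR" by (rule vec_meas[OF mi])
  define B' where "B' = max B 0"
  define C where "C = B' * (LINT s|MT. norm (w s))"
  define K where "K = real CARD('n) * C"
  have nwi: "integrable MT (\<lambda>s. norm (w s))" by (rule L2_norm_int[OF fMT w])
  have bnd_i: "norm (eff MT h w r $ i) \<le> C" if r: "r \<in> SR" for r i
  proof -
    have "norm (eff MT h w r $ i) = norm (LINT s|MT. h r s * w s $ i)" by (simp add: eff_def)
    also have "\<dots> \<le> (LINT s|MT. norm (h r s * w s $ i))" by (rule integral_norm_bound)
    also have "\<dots> \<le> (LINT s|MT. B' * norm (w s))"
    proof (rule integral_mono_AE')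
      show "integrable MT (\<lambda>s. B' * norm (w s))" using nwi by (rule Bochner_Integration.integrable_mult_right)
      show "AE s in MT. norm (h r s * w s $ i) \<le> B' * norm (w s)"
        using AT
      proof (rule AE_mp, intro AE_I2 impI)
        fix s assume s: "s \<in> ST"
        have "norm (h r s * w s $ i) = norm (h r s) * norm (w s $ i)" by (simp add: norm_mult)
        also have "\<dots> \<le> B' * norm (w s)"
          using B[OF r s] by (intro mult_mono Finite_Cartesian_Product.norm_nth_le) (auto simp: B'_def)
        finally show "norm (h r s * w s $ i) \<le> B' * norm (w s)" .
      qed
      show "AE s in MT. 0 \<le> B' * norm (w s)" by (simp add: B'_def)
    qed
    also have "\<dots> = C" by (simp add: C_def)
    finally show ?thesis .
  qed
  have bnd: "norm (eff MT h w r) \<le> K" if r: "r \<in> SR" for r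
  proof -
    have "norm (eff MT h w r) \<le> (\<Sum>i\<in>UNIV. norm (eff MT h w r $ i))"
      unfolding norm_vec_def by (rule L2_set_le_sum) simp
    also have "\<dots> \<le> (\<Sum>i\<in>(UNIV::'n set). C)" by (rule sum_mono) (rule bnd_i[OF r])
    also have "\<dots> = K" by (simp add: K_def)
    finally show ?thesis .
  qed
  show ?thesis
    unfolding L2_fun_def
  proof
    show "eff MT h w \<in> borel_measurable MR" by (rule me)
    show "integrable MR (\<lambda>x. (norm (eff MT h w x))\<^sup>2)"
    proof (rule Bochner_Integration.integrable_bound)
      show "integrable MR (\<lambda>x. K\<^sup>2)" by (rule finite_measure.integrable_const[OF fMR])
      show "(\<lambda>x. (norm (eff MT h w x))\<^sup>2) \<in> borel_measurable MR" using me by measurable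
      show "AE x in MR. norm ((norm (eff MT h w x))\<^sup>2) \<le> norm (K\<^sup>2)"
        using AR
      proof (rule AE_mp, intro AE_I2 impI)
        fix r assume r: "r \<in> SR"
        have "(norm (eff MT h w r))\<^sup>2 \<le> K\<^sup>2" using bnd[OF r] by (intro power_mono) auto
        then show "norm ((norm (eff MT h w r))\<^sup>2) \<le> norm (K\<^sup>2)" by simp
      qed
    qed
  qed
qed

lemma re_cnj: "Re (cnj z * z) = (cmod z)\<^sup>2"
proof -
  have "Re (cnj z * z) = (Re z)\<^sup>2 + (Im z)\<^sup>2" by (simp add: power2_eq_square)
  then show ?thesis by (simp only: cmod_power2)
qed

lemma cdot_pos: "x \<noteq> 0 \<Longrightarrow> 0 < Re (cdot x (x :: complex^'n))"
proof -
  assume "x \<noteq> 0"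
  then obtain i where i: "x $ i \<noteq> 0" by (metis vec_eq_iff zero_index)
  have "Re (cdot x x) = (\<Sum>j\<in>UNIV. Re (cnj (x$j) * x$j))" unfolding cdot_def by (simp add: Re_sum)
  also have "0 < \<dots>"
  proof (rule sum_pos2[of UNIV i])
    show "0 < Re (cnj (x$i) * x$i)" using i by (simp only: re_cnj) simp
    show "\<And>j. j \<in> UNIV \<Longrightarrow> 0 \<le> Re (cnj (x$j) * x$j)" by (simp only: re_cnj) simp
  qed simp_all
  finally show ?thesis .
qed

lemma pos_def_cdot: "pos_def A \<longleftrightarrow> hermitian A \<and> (\<forall>x. x \<noteq> 0 \<longrightarrow> 0 < Re (cdot x (A *v x)))"
  by (simp add: pos_def_def cdot_def)


lemma key:
  fixes w :: "'a \<Rightarrow> complex^'n" and h :: "'b \<Rightarrow> 'a \<Rightarrow> complex"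
  assumes eL2: "L2_fun MR (eff MT h w)" and apos: "0 < sig_tilde PT sigma2 MT w"
  shows "\<exists>v U. L2_fun MR v \<and> pos_def U \<and>
           wmmse_obj PT sigma2 MR MT h w v U = real CARD('n) - rate_obj PT sigma2 MR MT h w"
    and "\<And>v U. L2_fun MR v \<Longrightarrow> pos_def U \<Longrightarrow>
           real CARD('n) - rate_obj PT sigma2 MR MT h w \<le> wmmse_obj PT sigma2 MR MT h w v U"
proof -
  define e where "e = eff MT h w"
  define a where "a = sig_tilde PT sigma2 MT w"
  define Q where "Q = Qmat MR MT h w"
  have Qe: "Q = outer_int MR e e" unfolding Q_def Qmat_def e_def ..
  have eL: "L2_fun MR e" using eL2 unfolding e_def .
  have a0: "0 < a" using apos unfolding a_def .
  define Us where "Us = mat 1 + (1 / a) *\<^sub>R Q"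
  have rate: "rate_obj PT sigma2 MR MT h w = ln (Re (det Us))"
    unfolding rate_obj_def Us_def Q_def a_def ..
  have hQ: "cadj Q = Q" unfolding Qe by (rule O4)
  have Qpsd: "0 \<le> Re (cdot x (Q *v x))" for x unfolding Qe by (rule O5[OF eL])
  have hUs: "cadj Us = Us" unfolding Us_def by (simp add: cadj_add cadj_scaleR cadj_mat1 hQ)
  have qUs: "Re (cdot x (Us *v x)) = Re (cdot x x) + (1 / a) * Re (cdot x (Q *v x))" for x
    unfolding Us_def qf_add qf_scaleR by simp
  have pUs: "pos_def Us"
    unfolding pos_def_cdot hermitian_def
  proof (intro conjI allI impI hUs)
    fix x :: "complex^'n" assume "x \<noteq> 0"
    then have "0 < Re (cdot x x)" by (rule cdot_pos)
    moreover have "0 \<le> (1 / a) * Re (cdot x (Q *v x))" using a0 Qpsd[of x] by simp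
    ultimately show "0 < Re (cdot x (Us *v x))" unfolding qUs by linarith
  qed
  have "Im (det Us) = 0 \<and> 0 < Re (det Us)"
    using F2[of UNIV Us] pos_def_spd[OF pUs] by (simp add: PS_UNIV)
  then have "det Us \<noteq> 0" by auto
  then have "invertible Us" by (simp add: invertible_det_nz)
  then obtain Ui where UsUi: "Us ** Ui = mat 1" and UiUs: "Ui ** Us = mat 1"
    unfolding invertible_def by blast
  have hUi: "cadj Ui = Ui"
  proof -
    have "cadj Ui ** Us = cadj (Us ** Ui)" by (simp only: cadj_mult hUs)
    also have "\<dots> = mat 1" by (simp only: UsUi cadj_mat1)
    finally have l: "cadj Ui ** Us = mat 1" .
    have "cadj Ui = cadj Ui ** (Us ** Ui)" by (simp only: UsUi matrix_mul_rid)
    also have "\<dots> = (cadj Ui ** Us) ** Ui" by (simp only: matrix_mul_assoc)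
    also have "\<dots> = Ui" by (simp only: l matrix_mul_lid)
    finally show ?thesis .
  qed
  have pUi: "pos_def Ui"
    unfolding pos_def_cdot hermitian_def
  proof (intro conjI allI impI hUi)
    fix x :: "complex^'n" assume x: "x \<noteq> 0"
    define y where "y = Ui *v x"
    have xy: "x = Us *v y" unfolding y_def by (simp add: matrix_vector_mul_assoc UsUi)
    then have "y \<noteq> 0" using x by auto
    then have "0 < Re (cdot y (Us *v y))" using pUs unfolding pos_def_cdot by blast
    moreover have "cdot x (Ui *v x) = cdot y (Us *v y)"
    proof -
      have "cdot x (Ui *v x) = cdot x y" by (simp only: y_def)
      also have "\<dots> = cdot (Us *v y) y" by (simp only: xy[symmetric])
      also have "\<dots> = cdot y (cadj Us *v y)" by (rule cdot_cadj[symmetric])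
      also have "\<dots> = cdot y (Us *v y)" by (simp only: hUs)
      finally show ?thesis .
    qed
    ultimately show "0 < Re (cdot x (Ui *v x))" by simp
  qed
  define P where "P = (1 / a) *\<^sub>R Ui"
  have hP: "cadj P = P" unfolding P_def by (simp add: cadj_scaleR hUi)
  have QaUs: "Q + a *\<^sub>R mat 1 = a *\<^sub>R Us"
    unfolding Us_def using a0 by (simp add: algebra_simps)
  have PQ: "P ** (Q + a *\<^sub>R mat 1) = mat 1"
    unfolding QaUs P_def using a0
    by (simp add: matrix_scalar_ac scalar_matrix_assoc[symmetric] UiUs)
  have aP: "a *\<^sub>R P = Ui" unfolding P_def using a0 by simp
  define vs where "vs r = e r v* P" for r
  have vsL: "L2_fun MR vs" unfolding vs_def by (rule L2_vm[OF eL])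
  have Efor: "mse_mat PT sigma2 MR MT h w v =
      Ui + outer_int MR (\<lambda>r. v r - vs r) e ** cadj (outer_int MR (\<lambda>r. v r - vs r) e)
         + a *\<^sub>R outer_int MR (\<lambda>r. v r - vs r) (\<lambda>r. v r - vs r)"
    if vL: "L2_fun MR v" for v :: "'b \<Rightarrow> complex^'n"
  proof -
    define D where "D r = v r - vs r" for r
    have DL: "L2_fun MR D" unfolding D_def by (rule L2_diff[OF vL vsL])
    define K where "K = outer_int MR D e"
    define W where "W = outer_int MR D D"
    define G where "G = outer_int MR v e"
    define V where "V = outer_int MR v v"
    have Gs: "outer_int MR vs e = P ** Q"
      unfolding vs_def Qe using O2[OF eL eL, of P] hP by simp
    have G1: "K = G - P ** Q"
      unfolding K_def G_def D_def using O3l[OF vL vsL eL] Gs by simp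
    then have G2: "G = P ** Q + K" by simp
    have W1: "W = outer_int MR v D - outer_int MR vs D"
      unfolding W_def D_def[abs_def] using O3l[OF vL vsL DL[unfolded D_def[abs_def]]] by simp
    have W2: "outer_int MR v D = V - outer_int MR v vs"
      unfolding V_def D_def[abs_def] using O3r[OF vL vL vsL] by simp
    have KP: "outer_int MR D vs = K ** P"
      unfolding vs_def K_def using O1[OF DL eL] by simp
    have W3: "outer_int MR vs D = P ** cadj K"
    proof -
      have "outer_int MR vs D = cadj (outer_int MR D vs)" by (simp add: O4)
      also have "\<dots> = P ** cadj K" unfolding KP by (simp add: cadj_mult hP)
      finally show ?thesis .
    qed
    have W4: "outer_int MR v vs = P ** Q ** P + K ** P"
    proof -
      have "outer_int MR v vs = G ** P" unfolding vs_def G_def using O1[OF vL eL] by simp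
      also have "\<dots> = P ** Q ** P + K ** P" unfolding G2 by (simp add: mm_add_r)
      finally show ?thesis .
    qed
    have V1: "V = outer_int MR v D + outer_int MR v vs" by (simp add: W2)
    have V1': "outer_int MR v D = W + outer_int MR vs D" by (simp add: W1)
    have V2: "V = P ** Q ** P + K ** P + P ** cadj K + W"
      unfolding V1 V1' W3 W4 by (simp only: ac_simps)
    have "mse_mat PT sigma2 MR MT h w v = (mat 1 - G) ** cadj (mat 1 - G) + a *\<^sub>R V"
      unfolding mse_mat_def Let_def G_def V_def a_def e_def ..
    also have "\<dots> = a *\<^sub>R P + K ** cadj K + a *\<^sub>R W"
      unfolding G2 V2 by (rule E_identity[OF PQ hP])
    finally show ?thesis unfolding aP K_def W_def D_def .
  qed
  show "\<exists>v U. L2_fun MR v \<and> pos_def U \<and>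
           wmmse_obj PT sigma2 MR MT h w v U = real CARD('n) - rate_obj PT sigma2 MR MT h w"
  proof (intro exI conjI)
    show "L2_fun MR vs" by (rule vsL)
    show "pos_def Us" by (rule pUs)
    have z: "outer_int MR (\<lambda>r. vs r - vs r) g = 0" for g :: "'b \<Rightarrow> complex^'n"
      by (simp add: outer_int_def vec_eq_iff)
    have "mse_mat PT sigma2 MR MT h w vs = Ui"
      using Efor[OF vsL] z by simp
    then have "trace (Us ** mse_mat PT sigma2 MR MT h w vs) = of_nat CARD('n)"
      by (simp add: UsUi trace_I)
    then show "wmmse_obj PT sigma2 MR MT h w vs Us = real CARD('n) - rate_obj PT sigma2 MR MT h w"
      unfolding wmmse_obj_def rate by simp
  qed
  fix v :: "'b \<Rightarrow> complex^'n" and U :: "complex^'n^'n" assume vL: "L2_fun MR v" and pU: "pos_def U"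
  define D where "D r = v r - vs r" for r
  have DL: "L2_fun MR D" unfolding D_def by (rule L2_diff[OF vL vsL])
  have EE: "Re (cdot x (Ui *v x)) \<le> Re (cdot x (mse_mat PT sigma2 MR MT h w v *v x))" for x
  proof (rule E_ge[OF Efor[OF vL]])
    show "0 \<le> a" using a0 by simp
    fix y show "0 \<le> Re (cdot y (outer_int MR (\<lambda>r. v r - vs r) (\<lambda>r. v r - vs r) *v y))"
      using O5[OF DL] unfolding D_def .
  qed
  have "real CARD('n) - ln (Re (det Us)) \<le> Re (trace (U ** mse_mat PT sigma2 MR MT h w v)) - ln (Re (det U))"
    by (rule LA_main[OF pU pUi UiUs EE])
  then show "real CARD('n) - rate_obj PT sigma2 MR MT h w \<le> wmmse_obj PT sigma2 MR MT h w v U"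
    unfolding wmmse_obj_def rate .
qed

theorem theorem2:
  fixes PT sigma2 :: real
    and ST SR :: "(real^3) set" and MT MR :: "(real^3) measure"
    and h :: "real^3 \<Rightarrow> real^3 \<Rightarrow> complex"
  assumes "PT > 0" and "sigma2 > 0"
    and "rect_aperture ST MT" and "rect_aperture SR MR"
    and "\<exists>B. \<forall>r\<in>SR. \<forall>s\<in>ST. norm (h r s) \<le> B"
    and "(\<lambda>(r, s). h r s) \<in> borel_measurable (MR \<Otimes>\<^sub>M MT)"
  shows "{w :: real^3 \<Rightarrow> complex^'n. admissible_bf MT w \<and>
            (\<forall>w' :: real^3 \<Rightarrow> complex^'n. admissible_bf MT w' \<longrightarrow> rate_obj PT sigma2 MR MT h w' \<le> rate_obj PT sigma2 MR MT h w)}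
       = {w :: real^3 \<Rightarrow> complex^'n. admissible_bf MT w \<and>
            (\<exists>(v :: real^3 \<Rightarrow> complex^'n) (U :: complex^'n^'n). L2_fun MR v \<and> pos_def U \<and>
               (\<forall>(w' :: real^3 \<Rightarrow> complex^'n) (v' :: real^3 \<Rightarrow> complex^'n) (U' :: complex^'n^'n).
                  admissible_bf MT w' \<and> L2_fun MR v' \<and> pos_def U' \<longrightarrow>
                  wmmse_obj PT sigma2 MR MT h w v U \<le> wmmse_obj PT sigma2 MR MT h w' v' U'))}"
proof -
  note fMT = rect_props(1)[OF assms(3)] and AT = rect_props(3)[OF assms(3)]
  note fMR = rect_props(1)[OF assms(4)] and AR = rect_props(3)[OF assms(4)]
  obtain B where B: "\<And>r s. r \<in> SR \<Longrightarrow> s \<in> ST \<Longrightarrow> norm (h r s) \<le> B" using assms(5) by blast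
  have eL: "L2_fun MR (eff MT h w)" if "admissible_bf MT w" for w :: "real^3 \<Rightarrow> complex^'n"
    using that unfolding admissible_bf_def
    by (intro eff_L2[OF fMT fMR assms(6) B AR AT]) auto
  have ap: "0 < sig_tilde PT sigma2 MT w" if "admissible_bf MT w" for w :: "real^3 \<Rightarrow> complex^'n"
    using that assms(1,2) unfolding admissible_bf_def sig_tilde_def by simp
  have K1: "\<exists>v U. L2_fun MR v \<and> pos_def U \<and>
           wmmse_obj PT sigma2 MR MT h w v U = real CARD('n) - rate_obj PT sigma2 MR MT h w"
    if "admissible_bf MT w" for w :: "real^3 \<Rightarrow> complex^'n"
    by (rule key(1)[OF eL[OF that] ap[OF that]])
  have K2: "real CARD('n) - rate_obj PT sigma2 MR MT h w \<le> wmmse_obj PT sigma2 MR MT h w v U"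
    if "admissible_bf MT w" "L2_fun MR v" "pos_def U"
    for w :: "real^3 \<Rightarrow> complex^'n" and v :: "real^3 \<Rightarrow> complex^'n" and U :: "complex^'n^'n"
    by (rule key(2)[OF eL[OF that(1)] ap[OF that(1)] that(2,3)])
  show ?thesis
  proof (rule set_eqI, rule iffI)
    fix w :: "real^3 \<Rightarrow> complex^'n"
    assume "w \<in> {w :: real^3 \<Rightarrow> complex^'n. admissible_bf MT w \<and>
            (\<forall>w' :: real^3 \<Rightarrow> complex^'n. admissible_bf MT w' \<longrightarrow> rate_obj PT sigma2 MR MT h w' \<le> rate_obj PT sigma2 MR MT h w)}"
    then have aw: "admissible_bf MT w"
      and opt: "\<And>w' :: real^3 \<Rightarrow> complex^'n. admissible_bf MT w' \<Longrightarrow> rate_obj PT sigma2 MR MT h w' \<le> rate_obj PT sigma2 MR MT h w"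
      by auto
    obtain v U where v: "L2_fun MR v" and U: "pos_def U"
      and eq: "wmmse_obj PT sigma2 MR MT h w v U = real CARD('n) - rate_obj PT sigma2 MR MT h w"
      using K1[OF aw] by blast
    have "wmmse_obj PT sigma2 MR MT h w v U \<le> wmmse_obj PT sigma2 MR MT h w' v' U'"
      if "admissible_bf MT w' \<and> L2_fun MR v' \<and> pos_def U'"
      for w' :: "real^3 \<Rightarrow> complex^'n" and v' :: "real^3 \<Rightarrow> complex^'n" and U' :: "complex^'n^'n"
    proof -
      have "rate_obj PT sigma2 MR MT h w' \<le> rate_obj PT sigma2 MR MT h w" using that opt by blast
      moreover have "real CARD('n) - rate_obj PT sigma2 MR MT h w' \<le> wmmse_obj PT sigma2 MR MT h w' v' U'"
        using that K2 by blast
      ultimately show ?thesis using eq by linarith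
    qed
    then show "w \<in> {w :: real^3 \<Rightarrow> complex^'n. admissible_bf MT w \<and>
            (\<exists>(v :: real^3 \<Rightarrow> complex^'n) (U :: complex^'n^'n). L2_fun MR v \<and> pos_def U \<and>
               (\<forall>(w' :: real^3 \<Rightarrow> complex^'n) (v' :: real^3 \<Rightarrow> complex^'n) (U' :: complex^'n^'n).
                  admissible_bf MT w' \<and> L2_fun MR v' \<and> pos_def U' \<longrightarrow>
                  wmmse_obj PT sigma2 MR MT h w v U \<le> wmmse_obj PT sigma2 MR MT h w' v' U'))}"
      using aw v U by blast
  next
    fix w :: "real^3 \<Rightarrow> complex^'n"
    assume "w \<in> {w :: real^3 \<Rightarrow> complex^'n. admissible_bf MT w \<and>
            (\<exists>(v :: real^3 \<Rightarrow> complex^'n) (U :: complex^'n^'n). L2_fun MR v \<and> pos_def U \<and>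
               (\<forall>(w' :: real^3 \<Rightarrow> complex^'n) (v' :: real^3 \<Rightarrow> complex^'n) (U' :: complex^'n^'n).
                  admissible_bf MT w' \<and> L2_fun MR v' \<and> pos_def U' \<longrightarrow>
                  wmmse_obj PT sigma2 MR MT h w v U \<le> wmmse_obj PT sigma2 MR MT h w' v' U'))}"
    then obtain v U where aw: "admissible_bf MT w" and v: "L2_fun MR v" and U: "pos_def U"
      and opt: "\<And>(w' :: real^3 \<Rightarrow> complex^'n) (v' :: real^3 \<Rightarrow> complex^'n) (U' :: complex^'n^'n).
                  admissible_bf MT w' \<Longrightarrow> L2_fun MR v' \<Longrightarrow> pos_def U' \<Longrightarrow>
                  wmmse_obj PT sigma2 MR MT h w v U \<le> wmmse_obj PT sigma2 MR MT h w' v' U'"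
      by blast
    have "rate_obj PT sigma2 MR MT h w' \<le> rate_obj PT sigma2 MR MT h w"
      if aw': "admissible_bf MT w'" for w' :: "real^3 \<Rightarrow> complex^'n"
    proof -
      obtain v' U' where v': "L2_fun MR v'" and U': "pos_def U'"
        and eq: "wmmse_obj PT sigma2 MR MT h w' v' U' = real CARD('n) - rate_obj PT sigma2 MR MT h w'"
        using K1[OF aw'] by blast
      have "real CARD('n) - rate_obj PT sigma2 MR MT h w \<le> wmmse_obj PT sigma2 MR MT h w v U"
        by (rule K2[OF aw v U])
      also have "\<dots> \<le> wmmse_obj PT sigma2 MR MT h w' v' U'" by (rule opt[OF aw' v' U'])
      finally show ?thesis using eq by linarith
    qed
    then show "w \<in> {w :: real^3 \<Rightarrow> complex^'n. admissible_bf MT w \<and>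
            (\<forall>w' :: real^3 \<Rightarrow> complex^'n. admissible_bf MT w' \<longrightarrow> rate_obj PT sigma2 MR MT h w' \<le> rate_obj PT sigma2 MR MT h w)}"
      using aw by blast
  qed
qed

end
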